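(* Let $K$ be a polyhedral cone and let $S$ be any slack matrix of $K$. Then $K$ is pointed if and only if $\dim(K)=\operatorname{rank}(S)$.
   Context: A matrix $S\in\mathbb{R}^{p\times q}$ is a slack matrix of a polyhedral cone $K\subseteq\mathbb{R}^n$ if there are $A\in\mathbb{R}^{p\times n}$, $B\in\mathbb{R}^{n\times q}$ with $K=\{x\in\mathbb{R}^n: x^TB\ge 0\}=\{y^TA: y\in\mathbb{R}_+^p\}$ and $S=AB$. A cone is pointed if its lineality space (the largest linear subspace it contains) is $\{0\}$. The dimension of a cone is the dimension of its linear span. *)

theory Defs
  imports "HOL-Analysis.Analysis"
begin

text \<open>Slack matrix: S = A B where K = {x. x^T B \<ge> 0} = {y^T A. y \<ge> 0}.
  Vectors are row vectors; x v* B is x^T B, y v* A is y^T A.\<close>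
definition is_slack_matrix :: "real^'q^'p \<Rightarrow> (real^'n) set \<Rightarrow> bool" where
  "is_slack_matrix S K \<longleftrightarrow>
     (\<exists>(A::real^'n^'p) (B::real^'q^'n).
        K = {x. \<forall>j. 0 \<le> (x v* B) $ j} \<and>
        K = {y v* A | y. \<forall>i. 0 \<le> y $ i} \<and>
        S = A ** B)"

definition polyhedral_cone :: "(real^'n) set \<Rightarrow> bool" where
  "polyhedral_cone K \<longleftrightarrow> polyhedron K \<and> cone K"

text \<open>Pointed: the lineality space (largest linear subspace contained in K) is {0},
  i.e. every linear subspace contained in K is {0}.\<close>
definition pointed :: "(real^'n) set \<Rightarrow> bool" where
  "pointed K \<longleftrightarrow> (\<forall>L. subspace L \<and> L \<subseteq> K \<longrightarrow> L = {0})"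

end

theory Submission
  imports Defs
begin

lemma vm_sum: "(y::real^'p) v* (A::real^'n^'p) = (\<Sum>i\<in>UNIV. (y$i) *\<^sub>R row i A)"
  by (simp add: vec_eq_iff vector_matrix_mult_def row_def sum_component mult.commute)

lemma vm_axis: "axis i (1::real) v* (A::real^'n^'p) = row i A"
  by (simp add: vec_eq_iff vector_matrix_mult_def row_def axis_def mult_if_delta)

lemma rows_mult: "rows ((A::real^'n^'p) ** (B::real^'q^'n)) = (\<lambda>x. x v* B) ` rows A"
proof -
  have "row i (A ** B) = row i A v* B" for i
    by (simp add: vec_eq_iff vector_matrix_mult_def row_def matrix_matrix_mult_def mult.commute)
  then show ?thesis by (auto simp: rows_def)
qed

lemma span_cone_rows:
  "span {y v* A | y. \<forall>i. 0 \<le> y $ i} = span (rows (A::real^'n^'p))"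
proof
  show "span {y v* A | y. \<forall>i. 0 \<le> y $ i} \<subseteq> span (rows A)"
  proof (rule span_minimal)
    show "{y v* A | y. \<forall>i. 0 \<le> y $ i} \<subseteq> span (rows A)"
    proof
      fix z assume "z \<in> {y v* A | y. \<forall>i. 0 \<le> y $ i}"
      then obtain y where z: "z = y v* A" by blast
      show "z \<in> span (rows A)" unfolding z vm_sum
        by (intro span_sum span_scale span_base) (auto simp: rows_def)
    qed
  qed simp
  show "span (rows A) \<subseteq> span {y v* A | y. \<forall>i. 0 \<le> y $ i}"
  proof (rule span_mono)
    show "rows A \<subseteq> {y v* A | y. \<forall>i. 0 \<le> y $ i}"
    proof
      fix z assume "z \<in> rows A"
      then obtain i where z: "z = row i A" by (auto simp: rows_def)
      have "z = axis i 1 v* A" by (simp add: z vm_axis)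
      moreover have "\<forall>k. 0 \<le> axis i (1::real) $ k" by (simp add: axis_def)
      ultimately show "z \<in> {y v* A | y. \<forall>i. 0 \<le> y $ i}" by blast
    qed
  qed
qed

lemma dim_image_lt:
  fixes f :: "'a::euclidean_space \<Rightarrow> 'b::euclidean_space"
  assumes lf: "linear f" and v: "v \<in> span S" "v \<noteq> 0" "f v = 0"
  shows "dim (f ` S) < dim S"
proof -
  have "independent {v}" using v by simp
  then obtain Bs where Bs: "{v} \<subseteq> Bs" "Bs \<subseteq> span S" "independent Bs" "span S \<subseteq> span Bs"
    using maximal_independent_subset_extend[of "{v}" "span S"] v by auto
  have fin: "finite Bs" using Bs(3) independent_imp_finite by blast
  have spaneq: "span Bs = span S"
    using Bs span_subspace subspace_span by (metis span_minimal subset_antisym span_mono span_span)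
  have cardB: "card Bs = dim S"
    by (metis Bs(3) dim_eq_card_independent dim_span spaneq)
  have "f ` S \<subseteq> f ` span S" using span_superset by blast
  also have "\<dots> = f ` span Bs" using spaneq by simp
  also have "\<dots> = span (f ` Bs)" using linear_span_image[OF lf] by simp
  also have "\<dots> \<subseteq> span (f ` (Bs - {v}))"
  proof (rule span_minimal)
    show "f ` Bs \<subseteq> span (f ` (Bs - {v}))"
    proof
      fix z assume "z \<in> f ` Bs"
      then obtain b where b: "b \<in> Bs" "z = f b" by blast
      show "z \<in> span (f ` (Bs - {v}))"
      proof (cases "b = v")
        case True then show ?thesis using b v span_zero by simp
      next
        case False then show ?thesis using b by (intro span_base) auto
      qed
    qed
  qed simp
  finally have "dim (f ` S) \<le> card (f ` (Bs - {v}))"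
    using dim_le_card fin by blast
  also have "\<dots> \<le> card (Bs - {v})" using fin card_image_le by blast
  also have "\<dots> < card Bs" using fin Bs(1) by (intro card_Diff1_less) auto
  finally show ?thesis using cardB by simp
qed

theorem lemma2p13:
  fixes K :: "(real^'n) set" and S :: "real^'q^'p"
  assumes "polyhedral_cone K"
    and "is_slack_matrix S K"
  shows "pointed K \<longleftrightarrow> dim (span K) = rank S"
proof -
  obtain A :: "real^'n^'p" and B :: "real^'q^'n" where
    K1: "K = {x. \<forall>j. 0 \<le> (x v* B) $ j}" and
    K2: "K = {y v* A | y. \<forall>i. 0 \<le> y $ i}" and SAB: "S = A ** B"
    using assms(2) unfolding is_slack_matrix_def by blast
  define f where "f = (\<lambda>x::real^'n. x v* B)"
  have lf: "linear f" unfolding f_def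
    using matrix_vector_mul_linear[of "transpose B"] by simp
  have spK: "span K = span (rows A)" using K2 span_cone_rows by simp
  have rS: "rank S = dim (f ` rows A)"
    unfolding SAB row_rank_def rows_mult f_def ..
  have dK: "dim (span K) = dim (rows A)" using spK by (simp add: dim_span)
  have ptd: "pointed K \<longleftrightarrow> (\<forall>x. f x = 0 \<longrightarrow> x = 0)"
  proof
    assume p: "pointed K"
    let ?N = "{x. f x = 0}"
    have "subspace ?N" unfolding subspace_def
      by (simp add: linear_0[OF lf] linear_add[OF lf] linear_scale[OF lf])
    moreover have "?N \<subseteq> K" unfolding K1 f_def by auto
    ultimately have "?N = {0}" using p unfolding pointed_def by blast
    then show "\<forall>x. f x = 0 \<longrightarrow> x = 0" by blast
  next
    assume inj: "\<forall>x. f x = 0 \<longrightarrow> x = 0"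
    show "pointed K" unfolding pointed_def
    proof (intro allI impI)
      fix L assume L: "subspace L \<and> L \<subseteq> K"
      have "x = 0" if "x \<in> L" for x
      proof -
        have "-x \<in> L" using L that subspace_neg by blast
        then have "x \<in> K" "-x \<in> K" using L that by auto
        then have "\<forall>j. 0 \<le> (x v* B) $ j" "\<forall>j. 0 \<le> ((-x) v* B) $ j" using K1 by auto
        moreover have "(-x) v* B = - (x v* B)"
          using linear_neg[OF lf] unfolding f_def by simp
        ultimately have "\<forall>j. (x v* B) $ j = 0"
          by (metis neg_0_le_iff_le order_antisym uminus_vec_def vec_lambda_beta)
        then have "f x = 0" unfolding f_def by (simp add: vec_eq_iff)
        then show ?thesis using inj by blast
      qed
      then show "L = {0}" using L subspace_0 by blast
    qed
  qed
  show ?thesis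
  proof (cases "\<forall>x. f x = 0 \<longrightarrow> x = 0")
    case True
    have "inj_on f (span (rows A))"
      using True linear_injective_0[OF lf] by (metis inj_on_subset subset_UNIV)
    then have "dim (f ` rows A) = dim (rows A)" using dim_image_eq[OF lf] by blast
    then show ?thesis using ptd True rS dK by simp
  next
    case False
    then obtain v where v: "f v = 0" "v \<noteq> 0" by blast
    have "v \<in> K" using v unfolding K1 f_def by simp
    then have "v \<in> span (rows A)" using spK span_superset by blast
    then have "dim (f ` rows A) < dim (rows A)" using dim_image_lt[OF lf] v by blast
    then show ?thesis using ptd False rS dK by simp
  qed
qed

end
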